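(* Let $(M_i)_{i\in I}$ be a family of sofic monoids (indexed by an arbitrary set $I$). Then the product monoid $\prod_{i\in I} M_i$ (with componentwise multiplication) is sofic.
   Context: For a non-empty finite set $X$, $\mathrm{Map}(X)$ is the monoid of all maps $X\to X$ under composition (identity $\mathrm{Id}_X$) with the Hamming metric $d_X(f,g)=|\{x\in X : f(x)\ne g(x)\}|/|X|$. For a monoid $M$, finite $K\subset M$ and $\varepsilon,\alpha>0$, a map $\varphi\colon M\to\mathrm{Map}(X)$ is a $(K,\varepsilon)$-morphism if $d_X(\varphi(k_1k_2),\varphi(k_1)\varphi(k_2))\le\varepsilon$ for all $k_1,k_2\in K$ and $d_X(\varphi(1_M),\mathrm{Id}_X)\le\varepsilon$; it is $(K,\alpha)$-injective if $d_X(\varphi(k_1),\varphi(k_2))\ge\alpha$ for all distinct $k_1,k_2\in K$. $M$ is sofic if for every finite $K\subset M$ and every $\varepsilon>0$ there exist a non-empty finite set $X$ and a $(K,1-\varepsilon)$-injective $(K,\varepsilon)$-morphism $\varphi\colon M\to\mathrm{Map}(X)$. *)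

theory Defs
  imports Complex_Main "HOL-Algebra.Group" "HOL-Library.FuncSet"
begin

definition hamming :: "'x set \<Rightarrow> ('x \<Rightarrow> 'x) \<Rightarrow> ('x \<Rightarrow> 'x) \<Rightarrow> real" where
  "hamming X f g = real (card {x \<in> X. f x \<noteq> g x}) / real (card X)"

definition approx_morphism ::
  "('a, 'b) monoid_scheme \<Rightarrow> 'x set \<Rightarrow> 'a set \<Rightarrow> real \<Rightarrow> ('a \<Rightarrow> 'x \<Rightarrow> 'x) \<Rightarrow> bool" where
  "approx_morphism M X K \<epsilon> \<phi> \<longleftrightarrow>
     (\<forall>m \<in> carrier M. \<phi> m \<in> X \<rightarrow> X) \<and>
     (\<forall>k1 \<in> K. \<forall>k2 \<in> K. hamming X (\<phi> (k1 \<otimes>\<^bsub>M\<^esub> k2)) (\<phi> k1 \<circ> \<phi> k2) \<le> \<epsilon>) \<and>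
     hamming X (\<phi> \<one>\<^bsub>M\<^esub>) id \<le> \<epsilon>"

definition approx_injective ::
  "'x set \<Rightarrow> 'a set \<Rightarrow> real \<Rightarrow> ('a \<Rightarrow> 'x \<Rightarrow> 'x) \<Rightarrow> bool" where
  "approx_injective X K \<alpha> \<phi> \<longleftrightarrow>
     (\<forall>k1 \<in> K. \<forall>k2 \<in> K. k1 \<noteq> k2 \<longrightarrow> hamming X (\<phi> k1) (\<phi> k2) \<ge> \<alpha>)"

text \<open>Sofic monoid. Finite sets X are taken inside nat (no loss: any finite set
  is in bijection with a finite set of naturals).\<close>
definition sofic :: "('a, 'b) monoid_scheme \<Rightarrow> bool" where
  "sofic M \<longleftrightarrow> monoid M \<and>
     (\<forall>K. K \<subseteq> carrier M \<and> finite K \<longrightarrow>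
       (\<forall>\<epsilon>::real. \<epsilon> > 0 \<longrightarrow>
         (\<exists>(X::nat set) \<phi>. finite X \<and> X \<noteq> {} \<and>
            approx_morphism M X K \<epsilon> \<phi> \<and> approx_injective X K (1 - \<epsilon>) \<phi>)))"

definition prod_monoid :: "'i set \<Rightarrow> ('i \<Rightarrow> ('a, 'b) monoid_scheme) \<Rightarrow> ('i \<Rightarrow> 'a) monoid" where
  "prod_monoid I M =
     \<lparr> carrier = (\<Pi>\<^sub>E i\<in>I. carrier (M i)),
       mult = (\<lambda>f g. \<lambda>i\<in>I. f i \<otimes>\<^bsub>M i\<^esub> g i),
       one = (\<lambda>i\<in>I. \<one>\<^bsub>M i\<^esub>) \<rparr>"

end

theory Submission
  imports Defs "HOL-Library.Nat_Bijection"
begin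

lemma ham_pair:
  fixes X1 X2 :: "nat set"
  assumes fin: "finite X1" "finite X2" "X1 \<noteq> {}" "X2 \<noteq> {}"
  and F: "\<forall>a\<in>X1. \<forall>b\<in>X2. F (prod_encode (a,b)) = prod_encode (f1 a, f2 b)"
  and G: "\<forall>a\<in>X1. \<forall>b\<in>X2. G (prod_encode (a,b)) = prod_encode (g1 a, g2 b)"
  shows "hamming (prod_encode ` (X1 \<times> X2)) F G \<le> hamming X1 f1 g1 + hamming X2 f2 g2"
    and "hamming X1 f1 g1 \<le> hamming (prod_encode ` (X1 \<times> X2)) F G"
    and "hamming X2 f2 g2 \<le> hamming (prod_encode ` (X1 \<times> X2)) F G"
proof -
  define D1 where "D1 = {a \<in> X1. f1 a \<noteq> g1 a}"
  define D2 where "D2 = {b \<in> X2. f2 b \<noteq> g2 b}"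
  have S: "{n \<in> prod_encode ` (X1 \<times> X2). F n \<noteq> G n} = prod_encode ` (D1 \<times> X2 \<union> X1 \<times> D2)"
    using F G by (auto simp: D1_def D2_def prod_encode_eq)
  have cS: "card {n \<in> prod_encode ` (X1 \<times> X2). F n \<noteq> G n} = card (D1 \<times> X2 \<union> X1 \<times> D2)"
    unfolding S by (rule card_image[OF inj_prod_encode])
  have cX: "card (prod_encode ` (X1 \<times> X2)) = card X1 * card X2"
    by (simp add: card_image[OF inj_prod_encode] card_cartesian_product)
  have fD1: "finite D1" "finite D2" using fin by (auto simp: D1_def D2_def)
  have c1: "card X1 > 0" "card X2 > 0" using fin by auto
  have up: "card (D1 \<times> X2 \<union> X1 \<times> D2) \<le> card D1 * card X2 + card X1 * card D2"
    using card_Un_le[of "D1 \<times> X2" "X1 \<times> D2"] by (simp add: card_cartesian_product)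
  have lo1: "card D1 * card X2 \<le> card (D1 \<times> X2 \<union> X1 \<times> D2)"
    using fD1 fin by (metis card_cartesian_product card_mono finite_Un finite_cartesian_product Un_upper1)
  have lo2: "card X1 * card D2 \<le> card (D1 \<times> X2 \<union> X1 \<times> D2)"
    using fD1 fin by (metis card_cartesian_product card_mono finite_Un finite_cartesian_product Un_upper2)
  have h: "hamming (prod_encode ` (X1 \<times> X2)) F G = real (card (D1 \<times> X2 \<union> X1 \<times> D2)) / (real (card X1) * real (card X2))"
    unfolding hamming_def cS cX by simp
  have h1: "hamming X1 f1 g1 = real (card D1) / real (card X1)" unfolding hamming_def D1_def by simp
  have h2: "hamming X2 f2 g2 = real (card D2) / real (card X2)" unfolding hamming_def D2_def by simp
  have r1: "real (card D1) / real (card X1) = real (card D1 * card X2) / (real (card X1) * real (card X2))"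
    using c1 by simp
  have r2: "real (card D2) / real (card X2) = real (card X1 * card D2) / (real (card X1) * real (card X2))"
    using c1 by simp
  have pos: "real (card X1) * real (card X2) > 0" using c1 by simp
  show "hamming (prod_encode ` (X1 \<times> X2)) F G \<le> hamming X1 f1 g1 + hamming X2 f2 g2"
    unfolding h h1 h2 r1 r2 add_divide_distrib[symmetric]
    apply (intro divide_right_mono)
    apply (metis up of_nat_add of_nat_mult of_nat_le_iff)
    using pos by simp
  show "hamming X1 f1 g1 \<le> hamming (prod_encode ` (X1 \<times> X2)) F G"
    unfolding h h1 r1 using pos by (intro divide_right_mono) (simp_all add: lo1 of_nat_mult[symmetric] del: of_nat_mult)
  show "hamming X2 f2 g2 \<le> hamming (prod_encode ` (X1 \<times> X2)) F G"
    unfolding h h2 r2 using pos by (intro divide_right_mono) (simp_all add: lo2 of_nat_mult[symmetric] del: of_nat_mult)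
qed

lemma prod_monoid_monoid:
  assumes "\<forall>i\<in>I. monoid (M i)"
  shows "monoid (prod_monoid I M)"
proof (rule monoidI)
  fix x y assume "x \<in> carrier (prod_monoid I M)" "y \<in> carrier (prod_monoid I M)"
  then show "x \<otimes>\<^bsub>prod_monoid I M\<^esub> y \<in> carrier (prod_monoid I M)"
    using assms by (auto simp: prod_monoid_def PiE_def Pi_def monoid.m_closed)
next
  show "\<one>\<^bsub>prod_monoid I M\<^esub> \<in> carrier (prod_monoid I M)"
    using assms by (auto simp: prod_monoid_def monoid.one_closed)
next
  fix x y z assume "x \<in> carrier (prod_monoid I M)" "y \<in> carrier (prod_monoid I M)"
     "z \<in> carrier (prod_monoid I M)"
  then show "x \<otimes>\<^bsub>prod_monoid I M\<^esub> y \<otimes>\<^bsub>prod_monoid I M\<^esub> z =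
           x \<otimes>\<^bsub>prod_monoid I M\<^esub> (y \<otimes>\<^bsub>prod_monoid I M\<^esub> z)"
    using assms by (auto simp: prod_monoid_def PiE_def Pi_def monoid.m_assoc intro!: ext)
next
  fix x assume "x \<in> carrier (prod_monoid I M)"
  then show "\<one>\<^bsub>prod_monoid I M\<^esub> \<otimes>\<^bsub>prod_monoid I M\<^esub> x = x"
    using assms by (auto simp: prod_monoid_def PiE_def Pi_def extensional_def intro!: ext)
next
  fix x assume "x \<in> carrier (prod_monoid I M)"
  then show "x \<otimes>\<^bsub>prod_monoid I M\<^esub> \<one>\<^bsub>prod_monoid I M\<^esub> = x"
    using assms by (auto simp: prod_monoid_def PiE_def Pi_def extensional_def intro!: ext)
qed

lemma prod_mult_app: "j \<in> I \<Longrightarrow> (k1 \<otimes>\<^bsub>prod_monoid I M\<^esub> k2) j = k1 j \<otimes>\<^bsub>M j\<^esub> k2 j"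
  by (simp add: prod_monoid_def)

lemma prod_one_app: "j \<in> I \<Longrightarrow> (\<one>\<^bsub>prod_monoid I M\<^esub>) j = \<one>\<^bsub>M j\<^esub>"
  by (simp add: prod_monoid_def)

lemma prod_carrier_app: "m \<in> carrier (prod_monoid I M) \<Longrightarrow> j \<in> I \<Longrightarrow> m j \<in> carrier (M j)"
  by (auto simp: prod_monoid_def)

lemma hamming_self: "hamming X f f = 0"
  by (simp add: hamming_def)

lemma main_ind:
  fixes I :: "'i set" and M :: "'i \<Rightarrow> ('a, 'b) monoid_scheme" and \<delta> :: real
  assumes sof: "\<forall>i\<in>I. sofic (M i)" and fJ: "finite J" and JI: "J \<subseteq> I"
    and K: "K \<subseteq> carrier (prod_monoid I M)" "finite K" and dp: "\<delta> > 0"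
  shows "\<exists>(X::nat set) \<phi>. finite X \<and> X \<noteq> {} \<and>
     (\<forall>m\<in>carrier (prod_monoid I M). \<phi> m \<in> X \<rightarrow> X) \<and>
     (\<forall>k1\<in>K. \<forall>k2\<in>K. hamming X (\<phi> (k1 \<otimes>\<^bsub>prod_monoid I M\<^esub> k2)) (\<phi> k1 \<circ> \<phi> k2) \<le> card J * \<delta>) \<and>
     hamming X (\<phi> \<one>\<^bsub>prod_monoid I M\<^esub>) id \<le> card J * \<delta> \<and>
     (\<forall>k1\<in>K. \<forall>k2\<in>K. \<forall>j\<in>J. k1 j \<noteq> k2 j \<longrightarrow> 1 - \<delta> \<le> hamming X (\<phi> k1) (\<phi> k2))"
  using fJ JI
proof (induction J rule: finite_induct)
  case empty
  show ?case
    by (rule exI[of _ "{0}"], rule exI[of _ "\<lambda>m. id"]) (simp add: hamming_self)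
next
  case (insert j J)
  let ?P = "prod_monoid I M"
  have JI': "J \<subseteq> I" using insert.prems by auto
  from insert.IH[OF JI'] obtain X1 :: "nat set" and \<phi>1 where C: "finite X1 \<and> X1 \<noteq> {} \<and>
    (\<forall>m\<in>carrier ?P. \<phi>1 m \<in> X1 \<rightarrow> X1) \<and>
    (\<forall>k1\<in>K. \<forall>k2\<in>K. hamming X1 (\<phi>1 (k1 \<otimes>\<^bsub>?P\<^esub> k2)) (\<phi>1 k1 \<circ> \<phi>1 k2) \<le> card J * \<delta>) \<and>
    hamming X1 (\<phi>1 \<one>\<^bsub>?P\<^esub>) id \<le> card J * \<delta> \<and>
    (\<forall>k1\<in>K. \<forall>k2\<in>K. \<forall>j\<in>J. k1 j \<noteq> k2 j \<longrightarrow> 1 - \<delta> \<le> hamming X1 (\<phi>1 k1) (\<phi>1 k2))"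
    by (elim exE) (erule that)
  note X1 = C[THEN conjunct1] C[THEN conjunct2, THEN conjunct1]
    C[THEN conjunct2, THEN conjunct2, THEN conjunct1]
    C[THEN conjunct2, THEN conjunct2, THEN conjunct2, THEN conjunct1]
    C[THEN conjunct2, THEN conjunct2, THEN conjunct2, THEN conjunct2, THEN conjunct1]
    C[THEN conjunct2, THEN conjunct2, THEN conjunct2, THEN conjunct2, THEN conjunct2]
  have jI: "j \<in> I" using insert by auto
  have sj: "sofic (M j)" using sof jI by auto
  have Kj: "(\<lambda>k. k j) ` K \<subseteq> carrier (M j)" "finite ((\<lambda>k. k j) ` K)"
    using K jI by (auto intro: prod_carrier_app)
  obtain X2 :: "nat set" and \<phi>2 where X2: "finite X2" "X2 \<noteq> {}"
    "approx_morphism (M j) X2 ((\<lambda>k. k j) ` K) \<delta> \<phi>2"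
    "approx_injective X2 ((\<lambda>k. k j) ` K) (1 - \<delta>) \<phi>2"
    using sj Kj dp unfolding sofic_def by blast
  have X2a: "\<forall>m\<in>carrier (M j). \<phi>2 m \<in> X2 \<rightarrow> X2"
    "\<forall>k1\<in>K. \<forall>k2\<in>K. hamming X2 (\<phi>2 (k1 j \<otimes>\<^bsub>M j\<^esub> k2 j)) (\<phi>2 (k1 j) \<circ> \<phi>2 (k2 j)) \<le> \<delta>"
    "hamming X2 (\<phi>2 \<one>\<^bsub>M j\<^esub>) id \<le> \<delta>"
    "\<forall>k1\<in>K. \<forall>k2\<in>K. k1 j \<noteq> k2 j \<longrightarrow> 1 - \<delta> \<le> hamming X2 (\<phi>2 (k1 j)) (\<phi>2 (k2 j))"
    using X2(3,4) unfolding approx_morphism_def approx_injective_def by auto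
  define X where "X = prod_encode ` (X1 \<times> X2)"
  define \<phi> where "\<phi> m n = prod_encode (\<phi>1 m (fst (prod_decode n)), \<phi>2 (m j) (snd (prod_decode n)))" for m n
  have enc: "\<phi> m (prod_encode (a,b)) = prod_encode (\<phi>1 m a, \<phi>2 (m j) b)" for m a b
    by (simp add: \<phi>_def)
  have cJ: "real (card (insert j J)) * \<delta> = card J * \<delta> + \<delta>"
    using insert by (simp add: algebra_simps)
  show ?case
  proof (rule exI[of _ X], rule exI[of _ \<phi>], intro conjI)
    show "finite X" "X \<noteq> {}" using X1 X2 by (auto simp: X_def)
    show "\<forall>m\<in>carrier ?P. \<phi> m \<in> X \<rightarrow> X"
    proof (intro ballI funcsetI)
      fix m n assume m: "m \<in> carrier ?P" and n: "n \<in> X"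
      then obtain a b where ab: "a \<in> X1" "b \<in> X2" "n = prod_encode (a,b)" by (auto simp: X_def)
      have "\<phi>1 m a \<in> X1" using X1(3) m ab by auto
      moreover have "\<phi>2 (m j) b \<in> X2" using X2a(1) prod_carrier_app[OF m jI] ab by auto
      ultimately show "\<phi> m n \<in> X" using ab by (simp add: enc X_def)
    qed
    show "\<forall>k1\<in>K. \<forall>k2\<in>K. hamming X (\<phi> (k1 \<otimes>\<^bsub>?P\<^esub> k2)) (\<phi> k1 \<circ> \<phi> k2) \<le> real (card (insert j J)) * \<delta>"
    proof (intro ballI)
      fix k1 k2 assume k: "k1 \<in> K" "k2 \<in> K"
      have "hamming X (\<phi> (k1 \<otimes>\<^bsub>?P\<^esub> k2)) (\<phi> k1 \<circ> \<phi> k2) \<le>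
        hamming X1 (\<phi>1 (k1 \<otimes>\<^bsub>?P\<^esub> k2)) (\<phi>1 k1 \<circ> \<phi>1 k2) +
        hamming X2 (\<phi>2 (k1 j \<otimes>\<^bsub>M j\<^esub> k2 j)) (\<phi>2 (k1 j) \<circ> \<phi>2 (k2 j))"
        unfolding X_def
        by (rule ham_pair(1)[OF X1(1) X2(1) X1(2) X2(2)]) (simp_all add: enc prod_mult_app[OF jI])
      also have "\<dots> \<le> card J * \<delta> + \<delta>" using X1(4) X2a(2) k by (meson add_mono)
      finally show "hamming X (\<phi> (k1 \<otimes>\<^bsub>?P\<^esub> k2)) (\<phi> k1 \<circ> \<phi> k2) \<le> real (card (insert j J)) * \<delta>"
        using cJ by simp
    qed
    have "hamming X (\<phi> \<one>\<^bsub>?P\<^esub>) id \<le> hamming X1 (\<phi>1 \<one>\<^bsub>?P\<^esub>) id + hamming X2 (\<phi>2 \<one>\<^bsub>M j\<^esub>) id"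
      unfolding X_def
      by (rule ham_pair(1)[OF X1(1) X2(1) X1(2) X2(2)]) (simp_all add: enc prod_one_app[OF jI])
    also have "\<dots> \<le> card J * \<delta> + \<delta>" using X1(5) X2a(3) by (meson add_mono)
    finally show "hamming X (\<phi> \<one>\<^bsub>?P\<^esub>) id \<le> real (card (insert j J)) * \<delta>" using cJ by simp
    show "\<forall>k1\<in>K. \<forall>k2\<in>K. \<forall>j'\<in>insert j J. k1 j' \<noteq> k2 j' \<longrightarrow> 1 - \<delta> \<le> hamming X (\<phi> k1) (\<phi> k2)"
    proof (intro ballI impI)
      fix k1 k2 j' assume k: "k1 \<in> K" "k2 \<in> K" and j': "j' \<in> insert j J" and ne: "k1 j' \<noteq> k2 j'"
      have L1: "hamming X1 (\<phi>1 k1) (\<phi>1 k2) \<le> hamming X (\<phi> k1) (\<phi> k2)"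
        unfolding X_def
        by (rule ham_pair(2)[where ?f2.0="\<phi>2 (k1 j)" and ?g2.0="\<phi>2 (k2 j)", OF X1(1) X2(1) X1(2) X2(2)]) (simp_all add: enc)
      have L2: "hamming X2 (\<phi>2 (k1 j)) (\<phi>2 (k2 j)) \<le> hamming X (\<phi> k1) (\<phi> k2)"
        unfolding X_def
        by (rule ham_pair(3)[where ?f1.0="\<phi>1 k1" and ?g1.0="\<phi>1 k2", OF X1(1) X2(1) X1(2) X2(2)]) (simp_all add: enc)
      show "1 - \<delta> \<le> hamming X (\<phi> k1) (\<phi> k2)"
      proof (cases "j' = j")
        case True
        then show ?thesis using X2a(4) k ne L2 by force
      next
        case False
        then show ?thesis using X1(6) k ne L1 j' by force
      qed
    qed
  qed
qed

theorem proposition3p7: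
  fixes I :: "'i set" and M :: "'i \<Rightarrow> ('a, 'b) monoid_scheme"
  assumes "\<forall>i \<in> I. sofic (M i)"
  shows "sofic (prod_monoid I M)"
  unfolding sofic_def
proof (intro conjI allI impI)
  show "monoid (prod_monoid I M)"
    using assms by (intro prod_monoid_monoid) (auto simp: sofic_def)
  fix K and \<epsilon> :: real
  assume K: "K \<subseteq> carrier (prod_monoid I M) \<and> finite K" and ep: "\<epsilon> > 0"
  define sel where "sel p = (SOME i. i \<in> I \<and> fst p i \<noteq> snd p i)" for p :: "('i \<Rightarrow> 'a) \<times> ('i \<Rightarrow> 'a)"
  define J where "J = sel ` {p \<in> K \<times> K. fst p \<noteq> snd p}"
  have ex: "\<exists>i. i \<in> I \<and> k1 i \<noteq> k2 i" if "k1 \<in> K" "k2 \<in> K" "k1 \<noteq> k2" for k1 k2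
  proof -
    have "k1 \<in> extensional I" "k2 \<in> extensional I"
      using K that by (auto simp: prod_monoid_def PiE_def)
    then show ?thesis using that(3) by (metis extensionalityI)
  qed
  have selp: "sel (k1,k2) \<in> I \<and> k1 (sel (k1,k2)) \<noteq> k2 (sel (k1,k2))"
    if "k1 \<in> K" "k2 \<in> K" "k1 \<noteq> k2" for k1 k2
    unfolding sel_def using someI_ex[OF ex[OF that]] by simp
  have fJ: "finite J" using K unfolding J_def by auto
  have JI: "J \<subseteq> I" unfolding J_def using selp by auto
  define \<delta> where "\<delta> = \<epsilon> / (card J + 1)"
  have dp: "\<delta> > 0" using ep by (simp add: \<delta>_def)
  have d1: "\<delta> \<le> \<epsilon>" using ep unfolding \<delta>_def by (simp add: field_simps)
  have d2: "card J * \<delta> \<le> \<epsilon>" using ep unfolding \<delta>_def by (simp add: field_simps)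
  obtain X :: "nat set" and \<phi> where X: "finite X" "X \<noteq> {}"
     "\<forall>m\<in>carrier (prod_monoid I M). \<phi> m \<in> X \<rightarrow> X"
     "\<forall>k1\<in>K. \<forall>k2\<in>K. hamming X (\<phi> (k1 \<otimes>\<^bsub>prod_monoid I M\<^esub> k2)) (\<phi> k1 \<circ> \<phi> k2) \<le> card J * \<delta>"
     "hamming X (\<phi> \<one>\<^bsub>prod_monoid I M\<^esub>) id \<le> card J * \<delta>"
     "\<forall>k1\<in>K. \<forall>k2\<in>K. \<forall>j\<in>J. k1 j \<noteq> k2 j \<longrightarrow> 1 - \<delta> \<le> hamming X (\<phi> k1) (\<phi> k2)"
    using main_ind[OF assms fJ JI _ _ dp, of K] K by blast
  show "\<exists>(X::nat set) \<phi>. finite X \<and> X \<noteq> {} \<and>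
            approx_morphism (prod_monoid I M) X K \<epsilon> \<phi> \<and> approx_injective X K (1 - \<epsilon>) \<phi>"
  proof (intro exI conjI)
    show "finite X" "X \<noteq> {}" by (fact X(1)) (fact X(2))
    show "approx_morphism (prod_monoid I M) X K \<epsilon> \<phi>"
      unfolding approx_morphism_def using X(3,4,5) d2 by (meson order_trans)
    show "approx_injective X K (1 - \<epsilon>) \<phi>"
      unfolding approx_injective_def
    proof (intro ballI impI)
      fix k1 k2 assume k: "k1 \<in> K" "k2 \<in> K" "k1 \<noteq> k2"
      have "sel (k1,k2) \<in> J" unfolding J_def using k by force
      then have "1 - \<delta> \<le> hamming X (\<phi> k1) (\<phi> k2)" using X(6) k selp[OF k] by blast
      then show "1 - \<epsilon> \<le> hamming X (\<phi> k1) (\<phi> k2)" using d1 by linarith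
    qed
  qed
qed

end
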